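(* Let $P$ be a finite poset. If $J(P)$ is CDE then its dual $J(P)^*$ is CDE; if $J(P)$ is mCDE then $J(P)^*$ is mCDE; if $J(P)$ is tCDE then $J(P)^*=J(P^* )$ is tCDE.
   Context: $J(P)$ is the poset of order ideals of $P$ ordered by inclusion; $R^*$ denotes the dual poset (order reversed), and $J(P)^*\cong J(P^* )$. $\mathbb{E}(\mu;f)=\sum f\cdot\mathbb{P}(\mu;\cdot)$. $\mathrm{ddeg}(x)$ is the number of elements covered by $x$; $\mathrm{uni}$ is uniform; $\mathrm{maxchain}$ gives $x$ probability proportional to the number of maximal chains through $x$; $\mathrm{chain}(k)$ gives $x$ probability $\#\{k\text{-chains }c_0<\cdots<c_k\text{ containing }x\}/((k+1)\#\{k\text{-chains}\})$. A poset is CDE if $\mathbb{E}(\mathrm{maxchain};\mathrm{ddeg})=\mathbb{E}(\mathrm{uni};\mathrm{ddeg})$ and mCDE if $\mathbb{E}(\mathrm{chain}(k);\mathrm{ddeg})=\mathbb{E}(\mathrm{uni};\mathrm{ddeg})$ for all $k$ from $0$ to the length of a longest chain. Toggle statistics on $J(P)$: $\mathcal{T}^+_p(I)=1$ iff $p\notin I$ and $p$ is minimal in $P\setminus I$; $\mathcal{T}^-_p(I)=1$ iff $p\in I$ and $p$ is maximal in $I$ (else $0$). $\mu$ on $J(P)$ is toggle-symmetric if $\mathbb{E}(\mu;\mathcal{T}^+_p)=\mathbb{E}(\mu;\mathcal{T}^-_p)$ for all $p\in P$. $J(P)$ is tCDE if $\mathbb{E}(\mu;\mathrm{ddeg})=\mathbb{E}(\mathrm{uni}_{J(P)};\mathrm{ddeg})$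 for every toggle-symmetric distribution $\mu$ on $J(P)$. *)

theory Defs
  imports Complex_Main
begin

definition finite_poset :: "'a set \<Rightarrow> ('a \<Rightarrow> 'a \<Rightarrow> bool) \<Rightarrow> bool" where
  "finite_poset X le \<longleftrightarrow> finite X
     \<and> (\<forall>x\<in>X. le x x)
     \<and> (\<forall>x\<in>X. \<forall>y\<in>X. le x y \<and> le y x \<longrightarrow> x = y)
     \<and> (\<forall>x\<in>X. \<forall>y\<in>X. \<forall>z\<in>X. le x y \<and> le y z \<longrightarrow> le x z)"

definition strict :: "('a \<Rightarrow> 'a \<Rightarrow> bool) \<Rightarrow> 'a \<Rightarrow> 'a \<Rightarrow> bool" where
  "strict le x y \<longleftrightarrow> le x y \<and> x \<noteq> y"

definition dual_rel :: "('a \<Rightarrow> 'a \<Rightarrow> bool) \<Rightarrow> 'a \<Rightarrow> 'a \<Rightarrow> bool" where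
  "dual_rel le x y = le y x"

definition covers :: "'a set \<Rightarrow> ('a \<Rightarrow> 'a \<Rightarrow> bool) \<Rightarrow> 'a \<Rightarrow> 'a \<Rightarrow> bool" where
  "covers X le y x \<longleftrightarrow> x \<in> X \<and> y \<in> X \<and> strict le x y
     \<and> \<not> (\<exists>z\<in>X. strict le x z \<and> strict le z y)"

definition ddeg :: "'a set \<Rightarrow> ('a \<Rightarrow> 'a \<Rightarrow> bool) \<Rightarrow> 'a \<Rightarrow> nat" where
  "ddeg X le x = card {y \<in> X. covers X le x y}"

definition is_chain :: "'a set \<Rightarrow> ('a \<Rightarrow> 'a \<Rightarrow> bool) \<Rightarrow> 'a set \<Rightarrow> bool" where
  "is_chain X le C \<longleftrightarrow> C \<subseteq> X \<and> (\<forall>x\<in>C. \<forall>y\<in>C. le x y \<or> le y x)"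

definition is_maxchain :: "'a set \<Rightarrow> ('a \<Rightarrow> 'a \<Rightarrow> bool) \<Rightarrow> 'a set \<Rightarrow> bool" where
  "is_maxchain X le C \<longleftrightarrow> is_chain X le C \<and> (\<forall>D. is_chain X le D \<and> C \<subseteq> D \<longrightarrow> D = C)"

text \<open>k-chains c_0 < ... < c_k, i.e. chains with exactly k+1 elements\<close>
definition kchains :: "'a set \<Rightarrow> ('a \<Rightarrow> 'a \<Rightarrow> bool) \<Rightarrow> nat \<Rightarrow> 'a set set" where
  "kchains X le k = {C. is_chain X le C \<and> card C = k + 1}"

definition chain_length :: "'a set \<Rightarrow> ('a \<Rightarrow> 'a \<Rightarrow> bool) \<Rightarrow> nat" where
  "chain_length X le = Max (card ` {C. is_chain X le C}) - 1"

definition expect :: "'a set \<Rightarrow> ('a \<Rightarrow> real) \<Rightarrow> ('a \<Rightarrow> real) \<Rightarrow> real" where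
  "expect X \<mu> f = (\<Sum>x\<in>X. f x * \<mu> x)"

definition uni :: "'a set \<Rightarrow> 'a \<Rightarrow> real" where
  "uni X x = 1 / real (card X)"

definition maxchain_dist :: "'a set \<Rightarrow> ('a \<Rightarrow> 'a \<Rightarrow> bool) \<Rightarrow> 'a \<Rightarrow> real" where
  "maxchain_dist X le x =
     real (card {C. is_maxchain X le C \<and> x \<in> C})
     / (\<Sum>y\<in>X. real (card {C. is_maxchain X le C \<and> y \<in> C}))"

definition chain_dist :: "'a set \<Rightarrow> ('a \<Rightarrow> 'a \<Rightarrow> bool) \<Rightarrow> nat \<Rightarrow> 'a \<Rightarrow> real" where
  "chain_dist X le k x =
     real (card {C \<in> kchains X le k. x \<in> C}) / (real (k + 1) * real (card (kchains X le k)))"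

definition ddeg_fun :: "'a set \<Rightarrow> ('a \<Rightarrow> 'a \<Rightarrow> bool) \<Rightarrow> 'a \<Rightarrow> real" where
  "ddeg_fun X le x = real (ddeg X le x)"

definition CDE :: "'a set \<Rightarrow> ('a \<Rightarrow> 'a \<Rightarrow> bool) \<Rightarrow> bool" where
  "CDE X le \<longleftrightarrow> expect X (maxchain_dist X le) (ddeg_fun X le) = expect X (uni X) (ddeg_fun X le)"

definition mCDE :: "'a set \<Rightarrow> ('a \<Rightarrow> 'a \<Rightarrow> bool) \<Rightarrow> bool" where
  "mCDE X le \<longleftrightarrow> (\<forall>k \<le> chain_length X le.
      expect X (chain_dist X le k) (ddeg_fun X le) = expect X (uni X) (ddeg_fun X le))"

definition order_ideals :: "'a set \<Rightarrow> ('a \<Rightarrow> 'a \<Rightarrow> bool) \<Rightarrow> 'a set set" where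
  "order_ideals P le = {I. I \<subseteq> P \<and> (\<forall>x\<in>I. \<forall>y\<in>P. le y x \<longrightarrow> y \<in> I)}"

text \<open>J(P) is order_ideals P le ordered by inclusion\<close>
definition incl :: "'a set \<Rightarrow> 'a set \<Rightarrow> bool" where
  "incl I J \<longleftrightarrow> I \<subseteq> J"

definition toggle_plus :: "'a set \<Rightarrow> ('a \<Rightarrow> 'a \<Rightarrow> bool) \<Rightarrow> 'a \<Rightarrow> 'a set \<Rightarrow> real" where
  "toggle_plus P le p I = (if p \<in> P - I \<and> \<not> (\<exists>q\<in>P - I. strict le q p) then 1 else 0)"

definition toggle_minus :: "'a set \<Rightarrow> ('a \<Rightarrow> 'a \<Rightarrow> bool) \<Rightarrow> 'a \<Rightarrow> 'a set \<Rightarrow> real" where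
  "toggle_minus P le p I = (if p \<in> I \<and> \<not> (\<exists>q\<in>I. strict le p q) then 1 else 0)"

definition is_distribution :: "'b set \<Rightarrow> ('b \<Rightarrow> real) \<Rightarrow> bool" where
  "is_distribution X \<mu> \<longleftrightarrow> (\<forall>x\<in>X. \<mu> x \<ge> 0) \<and> (\<Sum>x\<in>X. \<mu> x) = 1"

definition toggle_symmetric :: "'a set \<Rightarrow> ('a \<Rightarrow> 'a \<Rightarrow> bool) \<Rightarrow> ('a set \<Rightarrow> real) \<Rightarrow> bool" where
  "toggle_symmetric P le \<mu> \<longleftrightarrow> (\<forall>p\<in>P.
      expect (order_ideals P le) \<mu> (toggle_plus P le p)
    = expect (order_ideals P le) \<mu> (toggle_minus P le p))"

text \<open>tCDE P le: the distributive lattice J(P) is tCDE\<close>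
definition tCDE :: "'a set \<Rightarrow> ('a \<Rightarrow> 'a \<Rightarrow> bool) \<Rightarrow> bool" where
  "tCDE P le \<longleftrightarrow> (\<forall>\<mu>. is_distribution (order_ideals P le) \<mu> \<and> toggle_symmetric P le \<mu> \<longrightarrow>
      expect (order_ideals P le) \<mu> (ddeg_fun (order_ideals P le) incl)
    = expect (order_ideals P le) (uni (order_ideals P le)) (ddeg_fun (order_ideals P le) incl))"

end

theory Submission
  imports Defs
begin


lemma strict_dual: "strict (dual_rel le) x y = strict le y x"
  by (auto simp: strict_def dual_rel_def)

lemma dual_dual: "dual_rel (dual_rel le) = le"
  by (auto simp: dual_rel_def fun_eq_iff)

lemma is_chain_dual: "is_chain X (dual_rel le) = is_chain X le"
  by (auto simp: is_chain_def dual_rel_def fun_eq_iff)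

lemma finite_poset_dual: "finite_poset P le \<Longrightarrow> finite_poset P (dual_rel le)"
  unfolding finite_poset_def dual_rel_def by blast

lemma covers_dual: "covers X (dual_rel le) y x = covers X le x y"
  unfolding covers_def strict_dual by blast

lemma chain_Union_mem:
  assumes "finite F" "F \<noteq> {}" "\<forall>x\<in>F. \<forall>y\<in>F. x \<subseteq> y \<or> y \<subseteq> x"
  shows "\<Union>F \<in> F \<and> \<Inter>F \<in> F"
  using assms
proof (induction F rule: finite_ne_induct)
  case (singleton x) then show ?case by simp
next
  case (insert x F)
  then have h: "\<Union>F \<in> F" "\<Inter>F \<in> F" by auto
  have "x \<subseteq> \<Union>F \<or> \<Union>F \<subseteq> x" using insert.prems h by auto
  moreover have "x \<subseteq> \<Inter>F \<or> \<Inter>F \<subseteq> x" using insert.prems h by auto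
  ultimately show ?case using h by (auto simp: Union_insert Inter_insert sup_absorb2 inf_absorb2 sup_absorb1 inf_absorb1)
qed

lemma max_elem:
  assumes "finite_poset P le" "finite S" "S \<noteq> {}" "S \<subseteq> P"
  shows "\<exists>x\<in>S. \<not> (\<exists>y\<in>S. strict le x y)"
  using assms(2-4)
proof (induction S rule: finite_ne_induct)
  case (singleton x) then show ?case by (simp add: strict_def)
next
  case (insert a S)
  then obtain x where x: "x \<in> S" "\<not> (\<exists>y\<in>S. strict le x y)" by auto
  show ?case
  proof (cases "strict le x a")
    case True
    have "\<not> (\<exists>y\<in>insert a S. strict le a y)"
    proof
      assume "\<exists>y\<in>insert a S. strict le a y"
      then obtain y where y: "y \<in> insert a S" "strict le a y" by auto
      then have "y \<noteq> a" by (auto simp: strict_def)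
      then have "y \<in> S" using y by auto
      have "le x y" using True y assms(1) insert.prems \<open>y \<in> S\<close> x(1)
        unfolding finite_poset_def strict_def by blast
      moreover have "x \<noteq> y"
      proof
        assume "x = y"
        then have "le a x" "le x a" using y True by (auto simp: strict_def)
        then show False using True assms(1) insert.prems x(1) unfolding finite_poset_def strict_def by blast
      qed
      ultimately show False using x \<open>y \<in> S\<close> by (auto simp: strict_def)
    qed
    then show ?thesis by auto
  next
    case False then show ?thesis using x by auto
  qed
qed

lemma min_elem:
  assumes "finite_poset P le" "finite S" "S \<noteq> {}" "S \<subseteq> P"
  shows "\<exists>x\<in>S. \<not> (\<exists>y\<in>S. strict le y x)"
  using max_elem[OF finite_poset_dual[OF assms(1)] assms(2-4)] by (simp add: strict_dual)

lemma double_count: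
  assumes "finite X"
  shows "(\<Sum>x\<in>X. card {y\<in>X. R x y}) = (\<Sum>y\<in>X. card {x\<in>X. R x y})"
proof -
  have c: "\<And>S Q. finite S \<Longrightarrow> card {y\<in>S. Q y} = (\<Sum>y\<in>S. if Q y then 1 else 0)"
    by (subst sum.inter_filter[symmetric]) auto
  have "(\<Sum>x\<in>X. card {y\<in>X. R x y}) = (\<Sum>x\<in>X. \<Sum>y\<in>X. if R x y then 1 else 0)"
    by (simp only: c[OF assms])
  also have "\<dots> = (\<Sum>y\<in>X. \<Sum>x\<in>X. if R x y then 1 else 0)" by (rule sum.swap)
  also have "\<dots> = (\<Sum>y\<in>X. card {x\<in>X. R x y})"
    by (simp only: c[OF assms])
  finally show ?thesis .
qed



definition TPr :: "'a set \<Rightarrow> ('a \<Rightarrow> 'a \<Rightarrow> bool) \<Rightarrow> 'a \<Rightarrow> 'a set \<Rightarrow> bool" where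
  "TPr P le p I \<longleftrightarrow> p \<in> P - I \<and> \<not> (\<exists>q\<in>P - I. strict le q p)"
definition TMr :: "('a \<Rightarrow> 'a \<Rightarrow> bool) \<Rightarrow> 'a \<Rightarrow> 'a set \<Rightarrow> bool" where
  "TMr le p I \<longleftrightarrow> p \<in> I \<and> \<not> (\<exists>q\<in>I. strict le p q)"

lemma ideal_sub: "I \<in> order_ideals P le \<Longrightarrow> I \<subseteq> P"
  by (simp add: order_ideals_def)

lemma ideal_down: "I \<in> order_ideals P le \<Longrightarrow> x \<in> I \<Longrightarrow> y \<in> P \<Longrightarrow> le y x \<Longrightarrow> y \<in> I"
  by (simp add: order_ideals_def)

lemma finite_ideals: "finite P \<Longrightarrow> finite (order_ideals P le)"
  by (rule finite_subset[of _ "Pow P"]) (auto simp: order_ideals_def)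

lemma ddeg_ideals:
  assumes fp: "finite_poset P le" and I: "I \<in> order_ideals P le"
  shows "ddeg (order_ideals P le) incl I = card {p\<in>P. TMr le p I}"
proof -
  let ?X = "order_ideals P le"
  have fin: "finite P" using fp by (simp add: finite_poset_def)
  have IP: "I \<subseteq> P" using I by (rule ideal_sub)
  have eq: "{J\<in>?X. covers ?X incl I J} = (\<lambda>p. I - {p}) ` {p\<in>P. TMr le p I}"
  proof (rule set_eqI, rule iffI)
    fix J assume "J \<in> {J\<in>?X. covers ?X incl I J}"
    then have J: "J \<in> ?X" "J \<subseteq> I" "J \<noteq> I" and nb: "\<not> (\<exists>z\<in>?X. strict incl J z \<and> strict incl z I)"
      by (auto simp: covers_def strict_def incl_def)
    have "finite (I - J)" using IP fin by (meson finite_Diff finite_subset)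
    moreover have "I - J \<noteq> {}" using J by auto
    ultimately obtain x where x: "x \<in> I - J" "\<not> (\<exists>y\<in>I - J. strict le x y)"
      using max_elem[OF fp, of "I - J"] IP by auto
    have Z: "I - {x} \<in> ?X"
      unfolding order_ideals_def
    proof (intro CollectI conjI ballI impI)
      show "I - {x} \<subseteq> P" using IP by auto
      fix a b assume a: "a \<in> I - {x}" "b \<in> P" "le b a"
      have "b \<in> I" using I a by (auto simp: order_ideals_def)
      moreover have "b \<noteq> x"
      proof
        assume "b = x"
        then have "a \<notin> J" using a J(1) x(1) by (auto simp: order_ideals_def)
        then show False using x a \<open>b = x\<close> by (auto simp: strict_def)
      qed
      ultimately show "b \<in> I - {x}" by auto
    qed
    have "J \<subseteq> I - {x}" using J x by auto
    then have "J = I - {x}"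
      using nb Z x by (auto simp: strict_def incl_def)
    moreover have "TMr le x I"
    proof -
      have "\<not> (\<exists>q\<in>I. strict le x q)"
      proof
        assume "\<exists>q\<in>I. strict le x q"
        then obtain q where q: "q \<in> I" "strict le x q" by auto
        have "q \<notin> J"
        proof
          assume "q \<in> J"
          then have "x \<in> J" using J(1) q x(1) IP by (auto simp: order_ideals_def strict_def)
          then show False using x by auto
        qed
        then show False using q x by auto
      qed
      then show ?thesis using x by (simp add: TMr_def)
    qed
    ultimately show "J \<in> (\<lambda>p. I - {p}) ` {p\<in>P. TMr le p I}" using x IP by auto
  next
    fix J assume "J \<in> (\<lambda>p. I - {p}) ` {p\<in>P. TMr le p I}"
    then obtain p where p: "p \<in> P" "TMr le p I" "J = I - {p}" by auto
    have Z: "I - {p} \<in> ?X"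
      unfolding order_ideals_def
    proof (intro CollectI conjI ballI impI)
      show "I - {p} \<subseteq> P" using IP by auto
      fix a b assume a: "a \<in> I - {p}" "b \<in> P" "le b a"
      have "b \<in> I" using I a by (auto simp: order_ideals_def)
      moreover have "b \<noteq> p"
        using p a by (auto simp: strict_def TMr_def)
      ultimately show "b \<in> I - {p}" by auto
    qed
    have "p \<in> I" using p by (simp add: TMr_def)
    then show "J \<in> {J\<in>?X. covers ?X incl I J}"
      using Z I p(3) by (auto simp: covers_def strict_def incl_def)
  qed
  have "inj_on (\<lambda>p. I - {p}) {p\<in>P. TMr le p I}"
    by (rule inj_onI) (auto simp: TMr_def)
  then show ?thesis unfolding ddeg_def eq by (simp add: card_image)
qed

lemma udeg_ideals:
  assumes fp: "finite_poset P le" and I: "I \<in> order_ideals P le"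
  shows "ddeg (order_ideals P le) (dual_rel incl) I = card {p\<in>P. TPr P le p I}"
proof -
  let ?X = "order_ideals P le"
  have fin: "finite P" using fp by (simp add: finite_poset_def)
  have IP: "I \<subseteq> P" using I by (rule ideal_sub)
  have eq: "{J\<in>?X. covers ?X incl J I} = (\<lambda>p. insert p I) ` {p\<in>P. TPr P le p I}"
  proof (rule set_eqI, rule iffI)
    fix J assume "J \<in> {J\<in>?X. covers ?X incl J I}"
    then have J: "J \<in> ?X" "I \<subseteq> J" "J \<noteq> I" and nb: "\<not> (\<exists>z\<in>?X. strict incl I z \<and> strict incl z J)"
      by (auto simp: covers_def strict_def incl_def)
    have JP: "J \<subseteq> P" using J(1) by (rule ideal_sub)
    have "finite (J - I)" using JP fin by (meson finite_Diff finite_subset)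
    moreover have "J - I \<noteq> {}" using J by auto
    ultimately obtain x where x: "x \<in> J - I" "\<not> (\<exists>y\<in>J - I. strict le y x)"
      using min_elem[OF fp, of "J - I"] JP by auto
    have Z: "insert x I \<in> ?X"
      unfolding order_ideals_def
    proof (intro CollectI conjI ballI impI)
      show "insert x I \<subseteq> P" using IP x JP by auto
      fix a b assume a: "a \<in> insert x I" "b \<in> P" "le b a"
      show "b \<in> insert x I"
      proof (cases "a = x")
        case True
        show ?thesis
        proof (rule ccontr)
          assume "b \<notin> insert x I"
          moreover have "b \<in> J" using J(1) x(1) a True by (auto simp: order_ideals_def)
          ultimately show False using x a True by (auto simp: strict_def)
        qed
      next
        case False then show ?thesis using I a by (auto simp: order_ideals_def)
      qed
    qed
    have "insert x I \<subseteq> J" using J x by auto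
    then have "J = insert x I"
      using nb Z x by (auto simp: strict_def incl_def)
    moreover have "TPr P le x I"
    proof -
      have "\<not> (\<exists>q\<in>P - I. strict le q x)"
      proof
        assume "\<exists>q\<in>P - I. strict le q x"
        then obtain q where q: "q \<in> P - I" "strict le q x" by auto
        have "q \<in> J" using J(1) q x(1) by (auto simp: order_ideals_def strict_def)
        then show False using q x by auto
      qed
      then show ?thesis using x JP by (auto simp: TPr_def)
    qed
    ultimately show "J \<in> (\<lambda>p. insert p I) ` {p\<in>P. TPr P le p I}" using x JP by auto
  next
    fix J assume "J \<in> (\<lambda>p. insert p I) ` {p\<in>P. TPr P le p I}"
    then obtain p where p: "p \<in> P" "TPr P le p I" "J = insert p I" by auto
    have Z: "insert p I \<in> ?X"
      unfolding order_ideals_def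
    proof (intro CollectI conjI ballI impI)
      show "insert p I \<subseteq> P" using IP p by auto
      fix a b assume a: "a \<in> insert p I" "b \<in> P" "le b a"
      show "b \<in> insert p I"
      proof (cases "a = p")
        case True
        then show ?thesis using p a by (auto simp: strict_def TPr_def)
      next
        case False then show ?thesis using I a by (auto simp: order_ideals_def)
      qed
    qed
    have "p \<notin> I" using p by (simp add: TPr_def)
    then show "J \<in> {J\<in>?X. covers ?X incl J I}"
      using Z I p(3) by (auto simp: covers_def strict_def incl_def)
  qed
  have "inj_on (\<lambda>p. insert p I) {p\<in>P. TPr P le p I}"
    by (rule inj_onI) (auto simp: TPr_def)
  then show ?thesis unfolding ddeg_def covers_dual eq by (simp add: card_image)
qed



definition Uset where "Uset p C I = {J\<in>C. I \<subseteq> J \<and> p \<notin> J}"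
definition Fch where "Fch p C I = (let U = Uset p C I; C1 = (C - U) \<union> insert p ` U in
   if insert p (\<Union>U) \<in> C then insert I C1 else C1)"
definition Fm where "Fm x = (case x of (p,C,I) \<Rightarrow> (p, Fch p C I, insert p (\<Union>(Uset p C I))))"
definition Wset where "Wset p C J = {K\<in>C. p\<in>K \<and> K \<subseteq> J}"
definition Gch where "Gch p C J = (let W = Wset p C J; C0 = (C - W) \<union> (\<lambda>K. K - {p}) ` W in
   if \<Inter>W - {p} \<in> C then insert J C0 else C0)"
definition Gm where "Gm x = (case x of (p,C,J) \<Rightarrow> (p, Gch p C J, \<Inter>(Wset p C J) - {p}))"

lemma core:
  assumes C: "C \<in> kchains X incl k" and X: "X = order_ideals P le" and IC: "I \<in> C"
    and tp: "TPr P le p I"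
  shows "Fch p C I \<in> kchains X incl k \<and> insert p (\<Union>(Uset p C I)) \<in> Fch p C I
     \<and> TMr le p (insert p (\<Union>(Uset p C I)))
     \<and> Gm (Fm (p, C, I)) = (p, C, I)"
proof -
  define U where "U = Uset p C I"
  define T where "T = \<Union>U"
  define C1 where "C1 = (C - U) \<union> insert p ` U"
  define C' where "C' = (if insert p T \<in> C then insert I C1 else C1)"
  have C'def: "Fch p C I = C'" unfolding C'_def C1_def T_def U_def Fch_def Let_def by simp
  have ch: "\<forall>a\<in>C. \<forall>b\<in>C. a \<subseteq> b \<or> b \<subseteq> a" and CX: "C \<subseteq> X" and cardC: "card C = k + 1"
    using C by (auto simp: kchains_def is_chain_def incl_def)
  have finC: "finite C" by (rule ccontr) (use cardC in simp)
  have pI: "p \<notin> I" "p \<in> P" and D: "\<forall>q\<in>P. strict le q p \<longrightarrow> q \<in> I"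
    using tp by (auto simp: TPr_def)
  have IU: "I \<in> U" using IC pI by (simp add: U_def Uset_def)
  have UC: "U \<subseteq> C" by (auto simp: U_def Uset_def)
  have finU: "finite U" using UC finC by (rule finite_subset)
  have Uprop: "\<forall>J\<in>U. I \<subseteq> J \<and> p \<notin> J" by (auto simp: U_def Uset_def)
  have TU: "T \<in> U" unfolding T_def
    using chain_Union_mem[of U] finU IU UC ch by blast
  have JT: "\<forall>J\<in>U. J \<subseteq> T" by (auto simp: T_def)
  have pT: "p \<notin> T" "I \<subseteq> T" using TU Uprop by auto
  have Xideal: "\<And>K a b. K \<in> X \<Longrightarrow> a \<in> K \<Longrightarrow> b \<in> P \<Longrightarrow> le b a \<Longrightarrow> b \<in> K"
    using X by (auto simp: order_ideals_def)
  have XP: "\<And>K. K \<in> X \<Longrightarrow> K \<subseteq> P" using X by (auto simp: order_ideals_def)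
  have cls: "\<forall>K\<in>C. K \<in> U \<or> (K \<subseteq> I \<and> K \<noteq> I \<and> p \<notin> K) \<or> (p \<in> K \<and> insert p T \<subseteq> K)"
  proof
    fix K assume K: "K \<in> C"
    show "K \<in> U \<or> (K \<subseteq> I \<and> K \<noteq> I \<and> p \<notin> K) \<or> (p \<in> K \<and> insert p T \<subseteq> K)"
    proof (cases "p \<in> K")
      case True
      have "T \<in> C" using TU UC by auto
      then have "T \<subseteq> K \<or> K \<subseteq> T" using ch K by auto
      then show ?thesis using True pT by auto
    next
      case False
      then show ?thesis using ch K IC by (auto simp: U_def Uset_def)
    qed
  qed
  have insX: "\<forall>J\<in>U. insert p J \<in> X"
  proof
    fix J assume J: "J \<in> U"
    then have JX: "J \<in> X" using UC CX by auto
    show "insert p J \<in> X" unfolding X order_ideals_def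
    proof (intro CollectI conjI ballI impI)
      show "insert p J \<subseteq> P" using XP[OF JX] pI by auto
      fix a b assume a: "a \<in> insert p J" "b \<in> P" "le b a"
      show "b \<in> insert p J"
      proof (cases "a = p")
        case True
        then show ?thesis using D a Uprop J by (auto simp: strict_def)
      next
        case False then show ?thesis using Xideal[OF JX] a by auto
      qed
    qed
  qed
  have TX: "T \<in> X" using TU UC CX by auto
  have IX: "I \<in> X" using IC CX by auto
  have C'X: "C' \<subseteq> X" using CX insX IX by (auto simp: C'_def C1_def)
  have ch': "\<forall>a\<in>C'. \<forall>b\<in>C'. a \<subseteq> b \<or> b \<subseteq> a"
  proof (intro ballI)
    fix a b assume a: "a \<in> C'" and b: "b \<in> C'"
    have cases': "\<And>x. x \<in> C' \<Longrightarrow> (x \<in> C \<and> x \<subseteq> I) \<or> (x \<in> C \<and> insert p T \<subseteq> x)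
        \<or> (\<exists>J\<in>U. x = insert p J)"
    proof -
      fix x assume x: "x \<in> C'"
      show "(x \<in> C \<and> x \<subseteq> I) \<or> (x \<in> C \<and> insert p T \<subseteq> x) \<or> (\<exists>J\<in>U. x = insert p J)"
      proof (cases "x \<in> C - U")
        case True then show ?thesis using cls by blast
      next
        case False then show ?thesis using x IC by (auto simp: C'_def C1_def split: if_splits)
      qed
    qed
    have UU: "\<And>J1 J2. J1 \<in> U \<Longrightarrow> J2 \<in> U \<Longrightarrow> insert p J1 \<subseteq> insert p J2 \<or> insert p J2 \<subseteq> insert p J1"
      using ch UC by (meson insert_mono subsetD)
    have IJ: "\<And>J. J \<in> U \<Longrightarrow> I \<subseteq> insert p J \<and> insert p J \<subseteq> insert p T"
      using Uprop JT by blast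
    have IT: "I \<subseteq> insert p T" using pT by blast
    have G: "x \<subseteq> y \<or> y \<subseteq> x"
      if x: "(x \<in> C \<and> x \<subseteq> I) \<or> (x \<in> C \<and> insert p T \<subseteq> x) \<or> (\<exists>J\<in>U. x = insert p J)"
      and y: "(y \<in> C \<and> y \<subseteq> I) \<or> (y \<in> C \<and> insert p T \<subseteq> y) \<or> (\<exists>J\<in>U. y = insert p J)"
      for x y
    proof -
      have L1: "x \<subseteq> y" if "x \<subseteq> I" "insert p T \<subseteq> y" for x y
        using that IT by (meson order_trans)
      have L2: "x \<subseteq> y" if "x \<subseteq> I" "J \<in> U" "y = insert p J" for x y J
        using that IJ by (meson order_trans)
      have L3: "y \<subseteq> x" if "insert p T \<subseteq> x" "J \<in> U" "y = insert p J" for x y J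
        using that IJ by (meson order_trans)
      have L4: "x \<subseteq> y \<or> y \<subseteq> x" if "x \<in> C" "y \<in> C" for x y
        using that ch by blast
      show ?thesis
        using x y
        apply (elim disjE conjE bexE)
        using L1 L2 L3 L4 UU by metis+
    qed
    show "a \<subseteq> b \<or> b \<subseteq> a" by (rule G[OF cases'[OF a] cases'[OF b]])
  qed
  have inter: "(C - U) \<inter> insert p ` U = (if insert p T \<in> C then {insert p T} else {})"
  proof -
    have "x = insert p T \<and> insert p T \<in> C" if xx: "x \<in> (C - U)" "x \<in> insert p ` U" for x
    proof -
      obtain J where J: "J \<in> U" "x = insert p J" using xx by auto
      have "insert p T \<subseteq> x" using cls xx J by auto
      moreover have "x \<subseteq> insert p T" using J JT by auto
      ultimately have "x = insert p T" by blast
      then show ?thesis using xx by simp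
    qed
    moreover have "insert p T \<in> (C - U) \<inter> insert p ` U" if "insert p T \<in> C"
      using that TU Uprop by auto
    ultimately show ?thesis by auto
  qed
  have injU: "inj_on (insert p) U"
    by (rule inj_onI) (metis Uprop insert_ident)
  have cU: "card (insert p ` U) = card U" using injU by (simp add: card_image)
  have cCU: "card (C - U) = card C - card U" using UC finU by (simp add: card_Diff_subset)
  have cUle: "card U \<le> card C" using UC finC by (simp add: card_mono)
  have cun: "card (C - U) + card (insert p ` U) = card C1 + card ((C - U) \<inter> insert p ` U)"
    unfolding C1_def by (rule card_Un_Int) (use finC finU in auto)
  have I_notin_C1: "I \<notin> C1" using IU pI by (auto simp: C1_def)
  have finC1: "finite C1" using finC finU by (simp add: C1_def)
  have cardC': "card C' = k + 1"
  proof (cases "insert p T \<in> C")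
    case True
    then have "card C1 = card C - 1" using cun inter cU cCU cUle by auto
    then show ?thesis using True I_notin_C1 finC1 cardC by (simp add: C'_def)
  next
    case False
    then have "card C1 = card C" using cun inter cU cCU cUle by auto
    then show ?thesis using False cardC by (simp add: C'_def)
  qed
  have K': "C' \<in> kchains X incl k"
    using C'X ch' cardC' by (auto simp: kchains_def is_chain_def incl_def)
  have iT: "insert p T \<in> C'" using TU by (auto simp: C'_def C1_def)
  have TM: "TMr le p (insert p T)"
    using pT Xideal[OF TX] pI by (auto simp: TMr_def strict_def)
  have W: "Wset p C' (insert p T) = insert p ` U"
  proof
    show "Wset p C' (insert p T) \<subseteq> insert p ` U"
    proof
      fix K assume K: "K \<in> Wset p C' (insert p T)"
      then have K1: "K \<in> C'" "p \<in> K" "K \<subseteq> insert p T" by (auto simp: Wset_def)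
      show "K \<in> insert p ` U"
      proof (cases "K \<in> C - U")
        case True
        then have "K = insert p T" using cls K1 by auto
        then show ?thesis using TU by auto
      next
        case False
        then show ?thesis using K1 pI by (auto simp: C'_def C1_def split: if_splits)
      qed
    qed
    show "insert p ` U \<subseteq> Wset p C' (insert p T)"
      using JT by (auto simp: Wset_def C'_def C1_def)
  qed
  have WI: "\<Inter>(insert p ` U) - {p} = I"
  proof -
    have "\<Inter>(insert p ` U) = insert p I"
    proof
      show "\<Inter>(insert p ` U) \<subseteq> insert p I" using IU by (intro Inter_lower) simp
      show "insert p I \<subseteq> \<Inter>(insert p ` U)" using Uprop by (intro Inter_greatest) auto
    qed
    then show ?thesis using pI by auto
  qed
  have IC': "(I \<in> C') = (insert p T \<in> C)" using I_notin_C1 by (auto simp: C'_def)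
  have img: "(\<lambda>K. K - {p}) ` insert p ` U = U"
  proof -
    have "(\<lambda>K. K - {p}) ` insert p ` U = (\<lambda>J. J) ` U"
      unfolding image_image using Uprop by (intro image_cong) auto
    then show ?thesis by simp
  qed
  have bk: "(if \<Inter>(insert p ` U) - {p} \<in> C' then insert (insert p T)
       ((C' - insert p ` U) \<union> (\<lambda>K. K - {p}) ` insert p ` U)
     else (C' - insert p ` U) \<union> (\<lambda>K. K - {p}) ` insert p ` U) = C"
  proof (cases "insert p T \<in> C")
    case True
    have a: "I \<notin> insert p ` U" using pI by auto
    have b: "(C - U) - insert p ` U = (C - U) - ((C - U) \<inter> insert p ` U)" by blast
    also have "\<dots> = C - U - {insert p T}" using inter True by simp
    finally have b': "(C - U) - insert p ` U = C - U - {insert p T}" .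
    have "C' = insert I ((C - U) \<union> insert p ` U)" using True by (simp add: C'_def C1_def)
    then have "C' - insert p ` U = insert I ((C - U) - insert p ` U)" using a by blast
    then have c: "C' - insert p ` U = insert I (C - U - {insert p T})" using b' by simp
    have d: "insert (insert p T) (insert I (C - U - {insert p T}) \<union> U) = C"
      using True IC UC by blast
    have "\<Inter>(insert p ` U) - {p} \<in> C'" using WI IC' True by simp
    then show ?thesis using c d img by simp
  next
    case False
    have b: "(C - U) - insert p ` U = (C - U) - ((C - U) \<inter> insert p ` U)" by blast
    also have "\<dots> = C - U" using inter False by simp
    finally have b': "(C - U) - insert p ` U = C - U" .
    have "C' = (C - U) \<union> insert p ` U" using False by (simp add: C'_def C1_def)
    then have c: "C' - insert p ` U = C - U" using b' by blast
    have d: "(C - U) \<union> U = C" using UC by blast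
    have "\<Inter>(insert p ` U) - {p} \<notin> C'" using WI IC' False by simp
    then show ?thesis using c d img by simp
  qed
  have e1: "Fm (p, C, I) = (p, C', insert p T)"
    using C'def by (simp add: Fm_def U_def[symmetric] T_def[symmetric])
  have e2: "Gch p C' (insert p T) = C"
    unfolding Gch_def Let_def W by (rule bk)
  have "Gm (Fm (p, C, I)) = (p, C, I)"
    unfolding e1 Gm_def using e2 W WI by simp
  then show ?thesis using K' iT TM C'def
    by (simp add: U_def[symmetric] T_def[symmetric])
qed



definition Aset where "Aset P le k = {(p,C,I). p\<in>P \<and> C \<in> kchains (order_ideals P le) incl k \<and> I\<in>C \<and> TPr P le p I}"
definition Bset where "Bset P le k = {(p,C,I). p\<in>P \<and> C \<in> kchains (order_ideals P le) incl k \<and> I\<in>C \<and> TMr le p I}"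

lemma kchains_sub: "C \<in> kchains X incl k \<Longrightarrow> C \<subseteq> X"
  by (simp add: kchains_def is_chain_def)

lemma finite_Bset: "finite P \<Longrightarrow> finite (Bset P le k)"
proof -
  assume fin: "finite P"
  let ?X = "order_ideals P le"
  have "Bset P le k \<subseteq> P \<times> Pow ?X \<times> ?X"
    by (auto simp: Bset_def dest: kchains_sub)
  moreover have "finite (P \<times> Pow ?X \<times> ?X)" using finite_ideals[OF fin, of le] fin by simp
  ultimately show ?thesis by (rule finite_subset)
qed

lemma finite_Aset: "finite P \<Longrightarrow> finite (Aset P le k)"
proof -
  assume fin: "finite P"
  let ?X = "order_ideals P le"
  have "Aset P le k \<subseteq> P \<times> Pow ?X \<times> ?X"
    by (auto simp: Aset_def dest: kchains_sub)
  moreover have "finite (P \<times> Pow ?X \<times> ?X)" using finite_ideals[OF fin, of le] fin by simp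
  ultimately show ?thesis by (rule finite_subset)
qed

lemma card_A_le_B:
  assumes "finite P"
  shows "card (Aset P le k) \<le> card (Bset P le k)"
proof (rule card_inj_on_le[where f = Fm])
  show "inj_on Fm (Aset P le k)"
  proof (rule inj_on_inverseI[where g = Gm])
    fix x assume "x \<in> Aset P le k"
    then obtain p C I where x: "x = (p, C, I)" "C \<in> kchains (order_ideals P le) incl k" "I \<in> C" "TPr P le p I"
      by (auto simp: Aset_def)
    show "Gm (Fm x) = x" using core[OF x(2) refl x(3) x(4)] x(1) by simp
  qed
  show "Fm ` Aset P le k \<subseteq> Bset P le k"
  proof
    fix y assume "y \<in> Fm ` Aset P le k"
    then obtain p C I where x: "y = Fm (p, C, I)" "p \<in> P" "C \<in> kchains (order_ideals P le) incl k" "I \<in> C" "TPr P le p I"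
      by (auto simp: Aset_def)
    show "y \<in> Bset P le k" using core[OF x(3) refl x(4) x(5)] x(1,2)
      by (simp add: Bset_def Fm_def)
  qed
  show "finite (Bset P le k)" using assms by (rule finite_Bset)
qed

lemma compl_ideal:
  assumes "I \<in> order_ideals P le"
  shows "P - I \<in> order_ideals P (dual_rel le)"
proof -
  have "I \<subseteq> P" and d: "\<And>x y. x \<in> I \<Longrightarrow> y \<in> P \<Longrightarrow> le y x \<Longrightarrow> y \<in> I"
    using assms by (auto simp: order_ideals_def)
  have "False" if "x \<in> P" "x \<notin> I" "y \<in> P" "le x y" "y \<in> I" for x y
    using d[of y x] that by blast
  then show ?thesis unfolding order_ideals_def dual_rel_def by auto
qed

lemma inj_compl: "inj_on (\<lambda>J. P - J) (Pow P)"
  by (rule inj_onI) auto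

lemma compl_kchain:
  assumes "C \<in> kchains (order_ideals P le) incl k"
  shows "(\<lambda>J. P - J) ` C \<in> kchains (order_ideals P (dual_rel le)) incl k"
proof -
  have CX: "C \<subseteq> order_ideals P le" and ch: "\<forall>a\<in>C. \<forall>b\<in>C. a \<subseteq> b \<or> b \<subseteq> a" and cC: "card C = k + 1"
    using assms by (auto simp: kchains_def is_chain_def incl_def)
  have CP: "C \<subseteq> Pow P" using CX by (auto simp: order_ideals_def)
  have "inj_on (\<lambda>J. P - J) C" using inj_compl CP by (rule inj_on_subset)
  then have "card ((\<lambda>J. P - J) ` C) = k + 1" using cC by (simp add: card_image)
  moreover have "(\<lambda>J. P - J) ` C \<subseteq> order_ideals P (dual_rel le)" using CX compl_ideal by blast
  moreover have "\<forall>a\<in>(\<lambda>J. P - J) ` C. \<forall>b\<in>(\<lambda>J. P - J) ` C. a \<subseteq> b \<or> b \<subseteq> a"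
    using ch by blast
  ultimately show ?thesis by (auto simp: kchains_def is_chain_def incl_def)
qed

lemma card_B_le_A_dual:
  assumes "finite P"
  shows "card (Bset P le k) \<le> card (Aset P (dual_rel le) k)"
proof (rule card_inj_on_le[where f = "\<lambda>(p,C,I). (p, (\<lambda>J. P - J) ` C, P - I)"])
  have sub: "C \<subseteq> Pow P \<and> I \<subseteq> P" if h: "(p,C,I) \<in> Bset P le k" for p C I
  proof -
    have "C \<in> kchains (order_ideals P le) incl k" "I \<in> C" using h by (simp_all add: Bset_def)
    then have "C \<subseteq> order_ideals P le" "I \<in> C" using kchains_sub by auto
    then show ?thesis unfolding order_ideals_def by blast
  qed
  show "inj_on (\<lambda>(p,C,I). (p, (\<lambda>J. P - J) ` C, P - I)) (Bset P le k)"
  proof (rule inj_onI)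
    fix x y assume x: "x \<in> Bset P le k" and y: "y \<in> Bset P le k"
      and e: "(\<lambda>(p,C,I). (p, (\<lambda>J. P - J) ` C, P - I)) x = (\<lambda>(p,C,I). (p, (\<lambda>J. P - J) ` C, P - I)) y"
    obtain p C I where xe: "x = (p,C,I)" by (cases x) auto
    obtain p' C' I' where ye: "y = (p',C',I')" by (cases y) auto
    have a: "p = p'" "(\<lambda>J. P - J) ` C = (\<lambda>J. P - J) ` C'" "P - I = P - I'"
      using e xe ye by auto
    have s1: "C \<subseteq> Pow P" "I \<subseteq> P" using sub x xe by auto
    have s2: "C' \<subseteq> Pow P" "I' \<subseteq> P" using sub y ye by auto
    have "C = C'" using a(2) inj_on_image_eq_iff[OF inj_compl s1(1) s2(1)] by simp
    moreover have "I = I'" using a(3) s1(2) s2(2) by blast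
    ultimately show "x = y" using xe ye a(1) by simp
  qed
  show "(\<lambda>(p,C,I). (p, (\<lambda>J. P - J) ` C, P - I)) ` Bset P le k \<subseteq> Aset P (dual_rel le) k"
  proof
    fix z assume "z \<in> (\<lambda>(p,C,I). (p, (\<lambda>J. P - J) ` C, P - I)) ` Bset P le k"
    then obtain p C I where a: "(p,C,I) \<in> Bset P le k" and ze: "z = (p, (\<lambda>J. P - J) ` C, P - I)"
      by auto
    have IP: "I \<subseteq> P" using sub[OF a] by simp
    have "P - (P - I) = I" using IP by blast
    moreover have tm: "TMr le p I" and pP: "p \<in> P" and CK: "C \<in> kchains (order_ideals P le) incl k"
      and IC: "I \<in> C"
      using a by (simp_all add: Bset_def)
    ultimately have "TPr P (dual_rel le) p (P - I)"
      by (simp add: TPr_def TMr_def strict_dual)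
    moreover have "P - I \<in> (\<lambda>J. P - J) ` C" using IC by blast
    ultimately show "z \<in> Aset P (dual_rel le) k" unfolding ze
      using compl_kchain[OF CK] pP by (simp add: Aset_def)
  qed
  show "finite (Aset P (dual_rel le) k)" using assms by (rule finite_Aset)
qed

lemma card_A_eq_B:
  assumes "finite P"
  shows "card (Aset P le k) = card (Bset P le k)"
proof -
  have 1: "card (Aset P le k) \<le> card (Bset P le k)" using assms by (rule card_A_le_B)
  have 2: "card (Bset P le k) \<le> card (Aset P (dual_rel le) k)" using assms by (rule card_B_le_A_dual)
  have 3: "card (Aset P (dual_rel le) k) \<le> card (Bset P (dual_rel le) k)" using assms by (rule card_A_le_B)
  have 4: "card (Bset P (dual_rel le) k) \<le> card (Aset P (dual_rel (dual_rel le)) k)"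
    using assms by (rule card_B_le_A_dual)
  then have 4: "card (Bset P (dual_rel le) k) \<le> card (Aset P le k)" by (simp only: dual_dual)
  show ?thesis using 1 2 3 4 by linarith
qed

lemma count_sum:
  assumes fin: "finite P"
  shows "(\<Sum>I\<in>order_ideals P le. card {p\<in>P. Q p I} * card {C \<in> kchains (order_ideals P le) incl k. I \<in> C})
    = card {(p,C,I). p\<in>P \<and> C \<in> kchains (order_ideals P le) incl k \<and> I\<in>C \<and> Q p I}"
proof -
  let ?X = "order_ideals P le"
  let ?K = "kchains ?X incl k"
  have finX: "finite ?X" using fin by (rule finite_ideals)
  have finK: "finite ?K"
    by (rule finite_subset[of _ "Pow ?X"]) (use finX in \<open>auto dest: kchains_sub\<close>)
  have eq: "{(p,C,I). p\<in>P \<and> C \<in> ?K \<and> I\<in>C \<and> Q p I}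
     = (\<lambda>(I,(p,C)). (p,C,I)) ` (SIGMA I:?X. {p\<in>P. Q p I} \<times> {C\<in>?K. I\<in>C})"
  proof (rule set_eqI, rule iffI)
    fix x assume "x \<in> {(p,C,I). p\<in>P \<and> C \<in> ?K \<and> I\<in>C \<and> Q p I}"
    then obtain p C I where x: "x = (p,C,I)" "p\<in>P" "C \<in> ?K" "I\<in>C" "Q p I" by auto
    have "I \<in> ?X" using kchains_sub[OF x(3)] x(4) by blast
    then show "x \<in> (\<lambda>(I,(p,C)). (p,C,I)) ` (SIGMA I:?X. {p\<in>P. Q p I} \<times> {C\<in>?K. I\<in>C})"
      using x by (intro image_eqI[where x="(I,(p,C))"]) auto
  next
    fix x assume "x \<in> (\<lambda>(I,(p,C)). (p,C,I)) ` (SIGMA I:?X. {p\<in>P. Q p I} \<times> {C\<in>?K. I\<in>C})"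
    then obtain p C I where x: "x = (p,C,I)" "p\<in>P" "C \<in> ?K" "I\<in>C" "Q p I" by auto
    then show "x \<in> {(p,C,I). p\<in>P \<and> C \<in> ?K \<and> I\<in>C \<and> Q p I}" by auto
  qed
  have inj: "inj_on (\<lambda>(I,(p,C)). (p,C,I)) (SIGMA I:?X. {p\<in>P. Q p I} \<times> {C\<in>?K. I\<in>C})"
    by (rule inj_onI) auto
  have "card {(p,C,I). p\<in>P \<and> C \<in> ?K \<and> I\<in>C \<and> Q p I}
     = card (SIGMA I:?X. {p\<in>P. Q p I} \<times> {C\<in>?K. I\<in>C})"
    unfolding eq using inj by (rule card_image)
  also have "\<dots> = (\<Sum>I\<in>?X. card ({p\<in>P. Q p I} \<times> {C\<in>?K. I\<in>C}))"
    using finX fin finK by (intro card_SigmaI) auto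
  also have "\<dots> = (\<Sum>I\<in>?X. card {p\<in>P. Q p I} * card {C\<in>?K. I\<in>C})"
    by (simp add: card_cartesian_product)
  finally show ?thesis by simp
qed



lemma ext_ideal:
  assumes fp: "finite_poset P le" and I: "I \<in> order_ideals P le" and J: "J \<in> order_ideals P le"
    and sub: "I \<subseteq> J" "I \<noteq> J"
  shows "\<exists>m. m \<in> J - I \<and> insert m I \<in> order_ideals P le"
proof -
  have fin: "finite P" using fp by (simp add: finite_poset_def)
  have JP: "J \<subseteq> P" using J by (rule ideal_sub)
  have IP: "I \<subseteq> P" using I by (rule ideal_sub)
  have "finite (J - I)" using JP fin by (meson finite_Diff finite_subset)
  moreover have "J - I \<noteq> {}" using sub by auto
  ultimately obtain x where x: "x \<in> J - I" "\<not> (\<exists>y\<in>J - I. strict le y x)"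
    using min_elem[OF fp, of "J - I"] JP by auto
  have Z: "insert x I \<in> order_ideals P le"
    unfolding order_ideals_def
  proof (intro CollectI conjI ballI impI)
    show "insert x I \<subseteq> P" using IP x JP by auto
    fix a b assume a: "a \<in> insert x I" "b \<in> P" "le b a"
    show "b \<in> insert x I"
    proof (cases "a = x")
      case True
      show ?thesis
      proof (rule ccontr)
        assume "b \<notin> insert x I"
        moreover have "b \<in> J" using J x(1) a True by (auto simp: order_ideals_def)
        ultimately show False using x a True by (auto simp: strict_def)
      qed
    next
      case False then show ?thesis using I a by (auto simp: order_ideals_def)
    qed
  qed
  then show ?thesis using x by blast
qed

lemma chain_card_le:
  assumes fin: "finite P" and D: "is_chain (order_ideals P le) incl D"
  shows "finite D \<and> card D \<le> card P + 1"
proof -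
  have DX: "D \<subseteq> order_ideals P le" and ch: "\<forall>a\<in>D. \<forall>b\<in>D. a \<subseteq> b \<or> b \<subseteq> a"
    using D by (auto simp: is_chain_def incl_def)
  have finD: "finite D" using DX finite_ideals[OF fin] by (rule finite_subset)
  have DP: "\<forall>a\<in>D. a \<subseteq> P" using DX by (auto simp: order_ideals_def)
  have inj: "inj_on card D"
  proof (rule inj_onI)
    fix a b assume ab: "a \<in> D" "b \<in> D" "card a = card b"
    have fa: "finite a" "finite b" using DP ab fin finite_subset by blast+
    show "a = b"
    proof (cases "a \<subseteq> b")
      case True then show ?thesis using card_subset_eq fa ab by metis
    next
      case False then have "b \<subseteq> a" using ch ab by blast
      then show ?thesis using card_subset_eq fa ab by metis
    qed
  qed
  have "card ` D \<subseteq> {0..card P}" using DP fin by (auto simp: card_mono)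
  then have "card (card ` D) \<le> card {0..card P}" by (intro card_mono) auto
  then show ?thesis using inj finD by (simp add: card_image)
qed

lemma maxchain_iff:
  assumes fp: "finite_poset P le"
  shows "is_maxchain (order_ideals P le) incl C \<longleftrightarrow> C \<in> kchains (order_ideals P le) incl (card P)"
proof -
  let ?X = "order_ideals P le"
  have fin: "finite P" using fp by (simp add: finite_poset_def)
  show ?thesis
  proof
    assume mc: "is_maxchain ?X incl C"
    then have chC: "is_chain ?X incl C" and mx: "\<And>D. is_chain ?X incl D \<Longrightarrow> C \<subseteq> D \<Longrightarrow> D = C"
      by (auto simp: is_maxchain_def)
    have CX: "C \<subseteq> ?X" and ch: "\<forall>a\<in>C. \<forall>b\<in>C. a \<subseteq> b \<or> b \<subseteq> a"
      using chC by (auto simp: is_chain_def incl_def)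
    have finC: "finite C" and cle: "card C \<le> card P + 1" using chain_card_le[OF fin chC] by auto
    have addZ: "Z \<in> C" if Z: "Z \<in> ?X" "\<forall>a\<in>C. a \<subseteq> Z \<or> Z \<subseteq> a" for Z
    proof -
      have "is_chain ?X incl (insert Z C)" using Z CX ch by (auto simp: is_chain_def incl_def)
      then have "insert Z C = C" using mx by blast
      then show ?thesis by blast
    qed
    have CP: "\<forall>a\<in>C. a \<subseteq> P" using CX by (auto simp: order_ideals_def)
    have emp: "{} \<in> C" by (rule addZ) (auto simp: order_ideals_def)
    have full: "P \<in> C" by (rule addZ) (use CP in \<open>auto simp: order_ideals_def\<close>)
    have allsz: "s \<in> card ` C" if s: "s \<le> card P" for s
    proof (rule ccontr)
      assume miss: "s \<notin> card ` C"
      let ?L = "{K\<in>C. card K < s}"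
      let ?H = "{K\<in>C. s < card K}"
      have s0: "s \<noteq> 0" using miss emp by force
      have Lne: "{} \<in> ?L" using emp s0 by simp
      have Hne: "P \<in> ?H" using full s miss by (metis (mono_tags, lifting) image_eqI le_neq_implies_less mem_Collect_eq)
      have finL: "finite ?L" "finite ?H" using finC by auto
      have chL: "\<forall>a\<in>?L. \<forall>b\<in>?L. a \<subseteq> b \<or> b \<subseteq> a" using ch by blast
      have chH: "\<forall>a\<in>?H. \<forall>b\<in>?H. a \<subseteq> b \<or> b \<subseteq> a" using ch by blast
      define I where "I = \<Union>?L"
      define J where "J = \<Inter>?H"
      have IL: "I \<in> ?L" unfolding I_def using chain_Union_mem[OF finL(1) _ chL] Lne by blast
      have JH: "J \<in> ?H" unfolding J_def using chain_Union_mem[OF finL(2) _ chH] Hne by blast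
      have Iup: "\<forall>K\<in>?L. K \<subseteq> I" unfolding I_def by blast
      have Jdown: "\<forall>K\<in>?H. J \<subseteq> K" unfolding J_def by blast
      have finJ: "finite J" using JH CP fin finite_subset by blast
      have finI: "finite I" using IL CP fin finite_subset by blast
      have IJ: "I \<subseteq> J"
      proof -
        have "I \<subseteq> J \<or> J \<subseteq> I" using ch IL JH by blast
        moreover have "\<not> J \<subseteq> I"
        proof
          assume "J \<subseteq> I"
          then have "card J \<le> card I" using finI by (simp add: card_mono)
          then show False using IL JH by simp
        qed
        ultimately show ?thesis by blast
      qed
      have "I \<noteq> J" using IL JH by auto
      then obtain m where m: "m \<in> J - I" "insert m I \<in> ?X"
        using ext_ideal[OF fp _ _ IJ] IL JH CX by blast
      have cmp: "\<forall>a\<in>C. a \<subseteq> insert m I \<or> insert m I \<subseteq> a"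
      proof
        fix a assume a: "a \<in> C"
        have "card a < s \<or> s < card a" using miss a by force
        then show "a \<subseteq> insert m I \<or> insert m I \<subseteq> a"
        proof
          assume "card a < s" then have "a \<subseteq> I" using Iup a by blast
          then show ?thesis by blast
        next
          assume "s < card a" then have "J \<subseteq> a" using Jdown a by blast
          then show ?thesis using m IJ by blast
        qed
      qed
      have ZC: "insert m I \<in> C" using addZ[OF m(2) cmp] .
      have cZ: "card (insert m I) = card I + 1" using m finI by simp
      have "card I < s" using IL by simp
      then consider "card (insert m I) < s" | "card (insert m I) = s" using cZ by linarith
      then show False
      proof cases
        case 1
        then have "insert m I \<subseteq> I" using Iup ZC by blast
        then show False using m by blast
      next
        case 2
        then show False using miss ZC by blast
      qed
    qed
    have "{0..card P} \<subseteq> card ` C" using allsz by auto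
    then have "card {0..card P} \<le> card (card ` C)" using finC by (intro card_mono) auto
    also have "\<dots> \<le> card C" using finC by (rule card_image_le)
    finally have "card P + 1 \<le> card C" by simp
    then have "card C = card P + 1" using cle by simp
    then show "C \<in> kchains ?X incl (card P)" using chC by (simp add: kchains_def)
  next
    assume K: "C \<in> kchains ?X incl (card P)"
    then have chC: "is_chain ?X incl C" and cC: "card C = card P + 1" by (auto simp: kchains_def)
    have "D = C" if D: "is_chain ?X incl D" "C \<subseteq> D" for D
    proof -
      have "finite D" "card D \<le> card P + 1" using chain_card_le[OF fin D(1)] by auto
      then show ?thesis using D(2) cC card_subset_eq
        by (metis antisym card_mono)
    qed
    then show "is_maxchain ?X incl C" using chC by (auto simp: is_maxchain_def)
  qed
qed



lemma real_card_filter: "finite A \<Longrightarrow> real (card {x\<in>A. Q x}) = (\<Sum>x\<in>A. if Q x then 1 else 0)"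
proof -
  assume fa: "finite A"
  have "real (card {x\<in>A. Q x}) = (\<Sum>x\<in>{x\<in>A. Q x}. 1)" by simp
  also have "\<dots> = (\<Sum>x\<in>A. if Q x then 1 else 0)" using fa by (rule sum.inter_filter)
  finally show ?thesis .
qed

lemma is_maxchain_dual: "is_maxchain X (dual_rel le) = is_maxchain X le"
  by (simp add: is_maxchain_def is_chain_dual fun_eq_iff)

lemma kchains_dual: "kchains X (dual_rel le) = kchains X le"
  by (simp add: kchains_def is_chain_dual fun_eq_iff)

lemma chain_dist_dual: "chain_dist X (dual_rel le) = chain_dist X le"
  by (simp add: chain_dist_def kchains_dual fun_eq_iff)

lemma maxchain_dist_dual: "maxchain_dist X (dual_rel le) = maxchain_dist X le"
  by (simp add: maxchain_dist_def is_maxchain_dual fun_eq_iff)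

lemma chain_length_dual: "chain_length X (dual_rel le) = chain_length X le"
  by (simp add: chain_length_def is_chain_dual)

lemma uni_sum_eq:
  assumes "finite X"
  shows "expect X (uni X) (ddeg_fun X incl) = expect X (uni X) (ddeg_fun X (dual_rel incl))"
proof -
  have "(\<Sum>I\<in>X. ddeg X incl I) = (\<Sum>I\<in>X. ddeg X (dual_rel incl) I)"
    unfolding ddeg_def covers_dual using double_count[OF assms, of "\<lambda>I J. covers X incl I J"] by simp
  then have "(\<Sum>I\<in>X. real (ddeg X incl I)) = (\<Sum>I\<in>X. real (ddeg X (dual_rel incl) I))"
    by (metis of_nat_sum)
  then show ?thesis unfolding expect_def ddeg_fun_def uni_def by (simp add: sum_divide_distrib[symmetric])
qed

lemma key_sum:
  assumes fp: "finite_poset P le"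
  shows "(\<Sum>I\<in>order_ideals P le. real (ddeg (order_ideals P le) incl I) * real (card {C \<in> kchains (order_ideals P le) incl k. I \<in> C}))
       = (\<Sum>I\<in>order_ideals P le. real (ddeg (order_ideals P le) (dual_rel incl) I) * real (card {C \<in> kchains (order_ideals P le) incl k. I \<in> C}))"
proof -
  let ?X = "order_ideals P le"
  let ?N = "\<lambda>I. card {C \<in> kchains ?X incl k. I \<in> C}"
  have fin: "finite P" using fp by (simp add: finite_poset_def)
  have "(\<Sum>I\<in>?X. ddeg ?X incl I * ?N I) = (\<Sum>I\<in>?X. card {p\<in>P. TMr le p I} * ?N I)"
    using ddeg_ideals[OF fp] by simp
  also have "\<dots> = card (Bset P le k)" unfolding Bset_def by (rule count_sum[OF fin])
  also have "\<dots> = card (Aset P le k)" using card_A_eq_B[OF fin] by simp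
  also have "\<dots> = (\<Sum>I\<in>?X. card {p\<in>P. TPr P le p I} * ?N I)" unfolding Aset_def by (rule count_sum[OF fin, symmetric])
  also have "\<dots> = (\<Sum>I\<in>?X. ddeg ?X (dual_rel incl) I * ?N I)"
    using udeg_ideals[OF fp] by simp
  finally have "real (\<Sum>I\<in>?X. ddeg ?X incl I * ?N I) = real (\<Sum>I\<in>?X. ddeg ?X (dual_rel incl) I * ?N I)" by simp
  then show ?thesis by simp
qed

lemma chain_expect_eq:
  assumes fp: "finite_poset P le"
  shows "expect (order_ideals P le) (chain_dist (order_ideals P le) incl k) (ddeg_fun (order_ideals P le) incl)
       = expect (order_ideals P le) (chain_dist (order_ideals P le) incl k) (ddeg_fun (order_ideals P le) (dual_rel incl))"
proof -
  let ?X = "order_ideals P le"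
  let ?d = "real (k + 1) * real (card (kchains ?X incl k))"
  have "\<And>f. expect ?X (chain_dist ?X incl k) f = (\<Sum>I\<in>?X. f I * real (card {C \<in> kchains ?X incl k. I \<in> C})) / ?d"
    unfolding expect_def chain_dist_def by (simp add: sum_divide_distrib)
  then show ?thesis unfolding ddeg_fun_def using key_sum[OF fp, of k] by simp
qed

lemma maxchain_expect_eq:
  assumes fp: "finite_poset P le"
  shows "expect (order_ideals P le) (maxchain_dist (order_ideals P le) incl) (ddeg_fun (order_ideals P le) incl)
       = expect (order_ideals P le) (maxchain_dist (order_ideals P le) incl) (ddeg_fun (order_ideals P le) (dual_rel incl))"
proof -
  let ?X = "order_ideals P le"
  let ?d = "(\<Sum>y\<in>?X. real (card {C. is_maxchain ?X incl C \<and> y \<in> C}))"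
  have eqs: "\<And>I. {C. is_maxchain ?X incl C \<and> I \<in> C} = {C \<in> kchains ?X incl (card P). I \<in> C}"
    using maxchain_iff[OF fp] by blast
  have "\<And>f. expect ?X (maxchain_dist ?X incl) f = (\<Sum>I\<in>?X. f I * real (card {C \<in> kchains ?X incl (card P). I \<in> C})) / ?d"
    unfolding expect_def maxchain_dist_def eqs[symmetric] by (simp add: sum_divide_distrib)
  then show ?thesis unfolding ddeg_fun_def using key_sum[OF fp, of "card P"] by simp
qed



lemma toggle_identity:
  assumes fp: "finite_poset P le" and ts: "toggle_symmetric P le \<rho>"
  shows "(\<Sum>I\<in>order_ideals P le. real (ddeg (order_ideals P le) incl I) * \<rho> I)
       = (\<Sum>I\<in>order_ideals P le. real (ddeg (order_ideals P le) (dual_rel incl) I) * \<rho> I)"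
proof -
  let ?X = "order_ideals P le"
  have fin: "finite P" using fp by (simp add: finite_poset_def)
  have d1: "real (ddeg ?X incl I) = (\<Sum>p\<in>P. toggle_minus P le p I)" if "I \<in> ?X" for I
    using ddeg_ideals[OF fp that] real_card_filter[OF fin, of "\<lambda>p. TMr le p I"]
    by (simp add: toggle_minus_def TMr_def)
  have d2: "real (ddeg ?X (dual_rel incl) I) = (\<Sum>p\<in>P. toggle_plus P le p I)" if "I \<in> ?X" for I
    using udeg_ideals[OF fp that] real_card_filter[OF fin, of "\<lambda>p. TPr P le p I"]
    by (simp add: toggle_plus_def TPr_def)
  have "(\<Sum>I\<in>?X. real (ddeg ?X incl I) * \<rho> I) = (\<Sum>I\<in>?X. (\<Sum>p\<in>P. toggle_minus P le p I) * \<rho> I)"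
    using d1 by simp
  also have "\<dots> = (\<Sum>p\<in>P. expect ?X \<rho> (toggle_minus P le p))"
    unfolding expect_def sum_distrib_right by (rule sum.swap)
  also have "\<dots> = (\<Sum>p\<in>P. expect ?X \<rho> (toggle_plus P le p))"
    using ts by (simp add: toggle_symmetric_def)
  also have "\<dots> = (\<Sum>I\<in>?X. (\<Sum>p\<in>P. toggle_plus P le p I) * \<rho> I)"
    unfolding expect_def sum_distrib_right by (rule sum.swap)
  also have "\<dots> = (\<Sum>I\<in>?X. real (ddeg ?X (dual_rel incl) I) * \<rho> I)"
    using d2 by simp
  finally show ?thesis .
qed

lemma bij_compl:
  "bij_betw (\<lambda>I. P - I) (order_ideals P le) (order_ideals P (dual_rel le))"
proof (rule bij_betw_imageI)
  show "inj_on (\<lambda>I. P - I) (order_ideals P le)"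
    by (rule inj_on_subset[OF inj_compl]) (auto simp: order_ideals_def)
  show "(\<lambda>I. P - I) ` order_ideals P le = order_ideals P (dual_rel le)"
  proof
    show "(\<lambda>I. P - I) ` order_ideals P le \<subseteq> order_ideals P (dual_rel le)"
      using compl_ideal by blast
    show "order_ideals P (dual_rel le) \<subseteq> (\<lambda>I. P - I) ` order_ideals P le"
    proof
      fix F assume F: "F \<in> order_ideals P (dual_rel le)"
      then have "P - F \<in> order_ideals P le" using compl_ideal[OF F] by (simp add: dual_dual)
      moreover have "F = P - (P - F)" using F by (auto simp: order_ideals_def)
      ultimately show "F \<in> (\<lambda>I. P - I) ` order_ideals P le" by blast
    qed
  qed
qed

lemma tCDE_dual:
  assumes fp: "finite_poset P le" and tc: "tCDE P le"
  shows "tCDE P (dual_rel le)"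
  unfolding tCDE_def
proof (intro allI impI, elim conjE)
  let ?X = "order_ideals P le"
  let ?Y = "order_ideals P (dual_rel le)"
  fix \<mu> assume dist: "is_distribution ?Y \<mu>" and ts: "toggle_symmetric P (dual_rel le) \<mu>"
  have fin: "finite P" using fp by (simp add: finite_poset_def)
  have finX: "finite ?X" using fin by (rule finite_ideals)
  have fpd: "finite_poset P (dual_rel le)" using fp by (rule finite_poset_dual)
  define \<nu> where "\<nu> I = \<mu> (P - I)" for I
  have bij: "bij_betw (\<lambda>I. P - I) ?X ?Y" by (rule bij_compl)
  have reidx: "\<And>g. (\<Sum>F\<in>?Y. g F) = (\<Sum>I\<in>?X. g (P - I))"
    using sum.reindex_bij_betw[OF bij] by metis
  have cardXY: "card ?Y = card ?X" using bij by (simp add: bij_betw_same_card)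
  have XP: "\<And>I. I \<in> ?X \<Longrightarrow> I \<subseteq> P" by (rule ideal_sub)
  have cc: "\<And>I. I \<in> ?X \<Longrightarrow> P - (P - I) = I" using XP by blast
  have nudist: "is_distribution ?X \<nu>"
  proof -
    have "\<forall>I\<in>?X. \<nu> I \<ge> 0" using dist compl_ideal by (auto simp: is_distribution_def \<nu>_def)
    moreover have "(\<Sum>I\<in>?X. \<nu> I) = 1" using dist reidx[of \<mu>] by (simp add: is_distribution_def \<nu>_def)
    ultimately show ?thesis by (simp add: is_distribution_def)
  qed
  have tp_eq: "toggle_plus P (dual_rel le) p (P - I) = toggle_minus P le p I" if "I \<in> ?X" for p I
    using cc[OF that] by (simp add: toggle_plus_def toggle_minus_def strict_dual)
  have tm_eq: "toggle_minus P (dual_rel le) p (P - I) = toggle_plus P le p I" if "I \<in> ?X" for p I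
    by (simp add: toggle_plus_def toggle_minus_def strict_dual)
  have nuts: "toggle_symmetric P le \<nu>"
    unfolding toggle_symmetric_def
  proof
    fix p assume p: "p \<in> P"
    have "expect ?Y \<mu> (toggle_plus P (dual_rel le) p) = expect ?Y \<mu> (toggle_minus P (dual_rel le) p)"
      using ts p by (simp add: toggle_symmetric_def)
    then have "(\<Sum>I\<in>?X. toggle_plus P (dual_rel le) p (P - I) * \<nu> I) = (\<Sum>I\<in>?X. toggle_minus P (dual_rel le) p (P - I) * \<nu> I)"
      unfolding expect_def reidx \<nu>_def .
    then have "(\<Sum>I\<in>?X. toggle_minus P le p I * \<nu> I) = (\<Sum>I\<in>?X. toggle_plus P le p I * \<nu> I)"
      using tp_eq tm_eq by simp
    then show "expect ?X \<nu> (toggle_plus P le p) = expect ?X \<nu> (toggle_minus P le p)"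
      unfolding expect_def by simp
  qed
  have step1: "expect ?X \<nu> (ddeg_fun ?X incl) = expect ?X (uni ?X) (ddeg_fun ?X incl)"
    using tc nudist nuts by (simp add: tCDE_def)
  have dY: "ddeg ?Y incl (P - I) = ddeg ?X (dual_rel incl) I" if "I \<in> ?X" for I
  proof -
    have "ddeg ?Y incl (P - I) = card {p\<in>P. TMr (dual_rel le) p (P - I)}"
      using ddeg_ideals[OF fpd compl_ideal[OF that]] .
    also have "\<dots> = card {p\<in>P. TPr P le p I}"
      by (simp add: TMr_def TPr_def strict_dual)
    also have "\<dots> = ddeg ?X (dual_rel incl) I" using udeg_ideals[OF fp that] by simp
    finally show ?thesis .
  qed
  have "expect ?Y \<mu> (ddeg_fun ?Y incl) = (\<Sum>I\<in>?X. real (ddeg ?X (dual_rel incl) I) * \<nu> I)"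
    unfolding expect_def reidx ddeg_fun_def \<nu>_def using dY by simp
  also have "\<dots> = (\<Sum>I\<in>?X. real (ddeg ?X incl I) * \<nu> I)"
    using toggle_identity[OF fp nuts] by simp
  also have "\<dots> = expect ?X (uni ?X) (ddeg_fun ?X incl)"
    using step1 by (simp add: expect_def ddeg_fun_def)
  also have "\<dots> = expect ?X (uni ?X) (ddeg_fun ?X (dual_rel incl))"
    using finX by (rule uni_sum_eq)
  also have "\<dots> = expect ?Y (uni ?Y) (ddeg_fun ?Y incl)"
    unfolding expect_def reidx ddeg_fun_def uni_def cardXY using dY by simp
  finally show "expect ?Y \<mu> (ddeg_fun ?Y incl) = expect ?Y (uni ?Y) (ddeg_fun ?Y incl)" .
qed

theorem proposition3p5:
  fixes P :: "'a set" and le :: "'a \<Rightarrow> 'a \<Rightarrow> bool"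
  assumes "finite_poset P le"
  shows "(CDE (order_ideals P le) incl \<longrightarrow> CDE (order_ideals P le) (dual_rel incl))
       \<and> (mCDE (order_ideals P le) incl \<longrightarrow> mCDE (order_ideals P le) (dual_rel incl))
       \<and> (tCDE P le \<longrightarrow> tCDE P (dual_rel le))"
proof (intro conjI impI)
  let ?X = "order_ideals P le"
  have fin: "finite P" using assms by (simp add: finite_poset_def)
  have finX: "finite ?X" using fin by (rule finite_ideals)
  show "CDE ?X (dual_rel incl)" if "CDE ?X incl"
    using that maxchain_expect_eq[OF assms] uni_sum_eq[OF finX]
    by (simp add: CDE_def maxchain_dist_dual)
  show "mCDE ?X (dual_rel incl)" if "mCDE ?X incl"
    using that chain_expect_eq[OF assms] uni_sum_eq[OF finX]
    by (simp add: mCDE_def chain_dist_dual chain_length_dual)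
  show "tCDE P (dual_rel le)" if "tCDE P le"
    using tCDE_dual[OF assms that] .
qed


end
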